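(* Let $G=(V,E)$ be a finite simple connected graph with $n=|V|$ vertices and graph distance $d$, and let $\omega\colon V\to(0,\infty)$ be a weight function with total weight $\omega=\omega(V)$. Let $\delta>0$ and $s=\frac{8\ln n}{\delta^2}$. Let $S=\{m_1,\dots,m_s\}$ be a random sample (multiset) of $s$ vertices, drawn independently with $\Pr(m_i=v)=\omega(v)/\omega$, and let $\Phi^{*}(v)=\sum_{u\in S}d(u,v)$. Let $q^{*}=\arg\min_{v\in V}\Phi^{*}(v)$. Then, with probability at least $1-n^{-3}$, $q^{*}$ is $\delta$-close to a median, i.e. $\Lambda(q^{*})\le(\frac12+\delta)\omega$.
   Context: For vertices $q,v$, a vertex $u$ is consistent with $(q,v)$ if $q=v=u$, or $q\ne v$ and $v$ lies on a shortest path between $u$ and $q$; $N(q,v)$ is the set of such $u$. $N(q)$ is the neighbor set of $q$. For $X\subseteq V$, $\omega(X)=\sum_{u\in X}\omega(u)$. $\Lambda(v)=\max_{u\in N(v)}\omega(N(v,u))$. A vertex $q$ is $\delta$-close to a median if $\Lambda(q)\le(\frac12+\delta)\omega(V)$. *)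

theory Defs
  imports "HOL-Probability.Probability"
begin

definition simple_graph :: "'a set \<Rightarrow> ('a \<Rightarrow> 'a \<Rightarrow> bool) \<Rightarrow> bool" where
  "simple_graph V E \<longleftrightarrow> finite V \<and> (\<forall>x y. E x y \<longrightarrow> x \<in> V \<and> y \<in> V)
     \<and> (\<forall>x y. E x y \<longrightarrow> E y x) \<and> (\<forall>x. \<not> E x x)"

definition walk_of_len :: "('a \<Rightarrow> 'a \<Rightarrow> bool) \<Rightarrow> 'a list \<Rightarrow> nat \<Rightarrow> 'a \<Rightarrow> 'a \<Rightarrow> bool" where
  "walk_of_len E xs k u v \<longleftrightarrow> length xs = Suc k \<and> hd xs = u \<and> last xs = v
     \<and> (\<forall>i<k. E (xs ! i) (xs ! Suc i))"

definition connected_graph :: "'a set \<Rightarrow> ('a \<Rightarrow> 'a \<Rightarrow> bool) \<Rightarrow> bool" where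
  "connected_graph V E \<longleftrightarrow> V \<noteq> {} \<and> (\<forall>u\<in>V. \<forall>v\<in>V. \<exists>xs k. walk_of_len E xs k u v)"

definition gdist :: "('a \<Rightarrow> 'a \<Rightarrow> bool) \<Rightarrow> 'a \<Rightarrow> 'a \<Rightarrow> nat" where
  "gdist E u v = (LEAST k. \<exists>xs. walk_of_len E xs k u v)"

definition on_shortest_path :: "('a \<Rightarrow> 'a \<Rightarrow> bool) \<Rightarrow> 'a \<Rightarrow> 'a \<Rightarrow> 'a \<Rightarrow> bool" where
  "on_shortest_path E v u q \<longleftrightarrow>
     (\<exists>xs. walk_of_len E xs (gdist E u q) u q \<and> v \<in> set xs)"

definition consistent_set :: "'a set \<Rightarrow> ('a \<Rightarrow> 'a \<Rightarrow> bool) \<Rightarrow> 'a \<Rightarrow> 'a \<Rightarrow> 'a set" where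
  "consistent_set V E q v =
     {u \<in> V. (q = v \<and> v = u) \<or> (q \<noteq> v \<and> on_shortest_path E v u q)}"

definition nbrs :: "'a set \<Rightarrow> ('a \<Rightarrow> 'a \<Rightarrow> bool) \<Rightarrow> 'a \<Rightarrow> 'a set" where
  "nbrs V E q = {u \<in> V. E q u}"

definition Lambda :: "'a set \<Rightarrow> ('a \<Rightarrow> 'a \<Rightarrow> bool) \<Rightarrow> ('a \<Rightarrow> real) \<Rightarrow> 'a \<Rightarrow> real" where
  "Lambda V E \<omega> v = Max ((\<lambda>u. sum \<omega> (consistent_set V E v u)) ` nbrs V E v)"

definition delta_close :: "'a set \<Rightarrow> ('a \<Rightarrow> 'a \<Rightarrow> bool) \<Rightarrow> ('a \<Rightarrow> real) \<Rightarrow> real \<Rightarrow> 'a \<Rightarrow> bool" where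
  "delta_close V E \<omega> \<delta> q \<longleftrightarrow> Lambda V E \<omega> q \<le> (1/2 + \<delta>) * sum \<omega> V"

definition weight_pmf :: "'a set \<Rightarrow> ('a \<Rightarrow> real) \<Rightarrow> 'a pmf" where
  "weight_pmf V \<omega> = embed_pmf (\<lambda>v. if v \<in> V then \<omega> v / sum \<omega> V else 0)"

definition sample_pmf :: "nat \<Rightarrow> 'a set \<Rightarrow> ('a \<Rightarrow> real) \<Rightarrow> (nat \<Rightarrow> 'a) pmf" where
  "sample_pmf s V \<omega> = Pi_pmf {..<s} undefined (\<lambda>_. weight_pmf V \<omega>)"

definition Phi_sample :: "('a \<Rightarrow> 'a \<Rightarrow> bool) \<Rightarrow> nat \<Rightarrow> (nat \<Rightarrow> 'a) \<Rightarrow> 'a \<Rightarrow> real" where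
  "Phi_sample E s m v = (\<Sum>i<s. real (gdist E (m i) v))"

definition is_argmin_Phi :: "'a set \<Rightarrow> ('a \<Rightarrow> 'a \<Rightarrow> bool) \<Rightarrow> nat \<Rightarrow> (nat \<Rightarrow> 'a) \<Rightarrow> 'a \<Rightarrow> bool" where
  "is_argmin_Phi V E s m q \<longleftrightarrow> q \<in> V \<and> (\<forall>v\<in>V. Phi_sample E s m q \<le> Phi_sample E s m v)"

end

theory Submission imports Defs begin

lemma pmf_weight:
  assumes fin: "finite V" and pos: "\<forall>v\<in>V. \<omega> v > 0" and ne: "V \<noteq> {}"
  shows "pmf (weight_pmf V \<omega>) x = (if x \<in> V then \<omega> x / sum \<omega> V else 0)"
proof -
  have S: "sum \<omega> V > 0" using fin pos ne by (intro sum_pos) auto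
  let ?f = "\<lambda>v. if v \<in> V then \<omega> v / sum \<omega> V else 0"
  have nn: "\<And>x. 0 \<le> ?f x" using pos S by auto
  have "(\<integral>\<^sup>+x. ennreal (?f x) \<partial>count_space UNIV) = (\<Sum>x\<in>V. ennreal (?f x))"
    by (rule nn_integral_count_space') (use fin in auto)
  also have "\<dots> = ennreal (\<Sum>x\<in>V. ?f x)" using pos S by (intro sum_ennreal) auto
  also have "(\<Sum>x\<in>V. ?f x) = 1" using S by (simp add: sum_divide_distrib[symmetric])
  finally have "(\<integral>\<^sup>+x. ennreal (?f x) \<partial>count_space UNIV) = 1" by simp
  then show ?thesis unfolding weight_pmf_def using nn by (subst pmf_embed_pmf) auto
qed

lemma set_weight:
  assumes fin: "finite V" and pos: "\<forall>v\<in>V. \<omega> v > 0" and ne: "V \<noteq> {}"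
  shows "set_pmf (weight_pmf V \<omega>) \<subseteq> V"
  using pmf_weight[OF assms] by (auto simp: set_pmf_eq split: if_splits)

lemma prob_weight:
  assumes fin: "finite V" and pos: "\<forall>v\<in>V. \<omega> v > 0" and ne: "V \<noteq> {}" and A: "A \<subseteq> V"
  shows "measure_pmf.prob (weight_pmf V \<omega>) A = sum \<omega> A / sum \<omega> V"
proof -
  have fA: "finite A" using A fin finite_subset by auto
  have "measure_pmf.prob (weight_pmf V \<omega>) A = sum (pmf (weight_pmf V \<omega>)) A"
    using fA by (rule measure_measure_pmf_finite)
  also have "\<dots> = (\<Sum>x\<in>A. \<omega> x / sum \<omega> V)" using A by (intro sum.cong) (auto simp: pmf_weight[OF fin pos ne])
  finally show ?thesis by (simp add: sum_divide_distrib)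
qed

lemma map_bern:
  "map_pmf (\<lambda>x. x \<in> A) P = bernoulli_pmf (measure_pmf.prob P A)"
proof (rule pmf_eqI)
  fix b :: bool
  have p: "0 \<le> measure_pmf.prob P A" "measure_pmf.prob P A \<le> 1" by auto
  show "pmf (map_pmf (\<lambda>x. x \<in> A) P) b = pmf (bernoulli_pmf (measure_pmf.prob P A)) b"
  proof (cases b)
    case True
    then show ?thesis using p by (simp add: pmf_map vimage_def)
  next
    case False
    have "(\<lambda>x. x \<in> A) -` {False} = UNIV - A" by auto
    then show ?thesis using p False measure_pmf.finite_measure_compl[of A P] by (simp add: pmf_map)
  qed
qed

lemma sample_binomial:
  "map_pmf (\<lambda>m. card {i\<in>{..<s}. m i \<in> A}) (sample_pmf s V \<omega>) =
     binomial_pmf s (measure_pmf.prob (weight_pmf V \<omega>) A)"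
proof -
  let ?p = "measure_pmf.prob (weight_pmf V \<omega>) A"
  have p: "?p \<in> {0..1}" by auto
  have "binomial_pmf s ?p = map_pmf (\<lambda>f. card {x\<in>{..<s}. f x})
          (Pi_pmf {..<s} (undefined \<in> A) (\<lambda>_. bernoulli_pmf ?p))"
    by (rule binomial_pmf_altdef') (use p in auto)
  also have "Pi_pmf {..<s} (undefined \<in> A) (\<lambda>_. bernoulli_pmf ?p) =
      Pi_pmf {..<s} (undefined \<in> A) (\<lambda>_. map_pmf (\<lambda>x. x \<in> A) (weight_pmf V \<omega>))"
    by (simp add: map_bern)
  also have "\<dots> = map_pmf (\<lambda>h. (\<lambda>x. x \<in> A) \<circ> h) (sample_pmf s V \<omega>)"
    unfolding sample_pmf_def by (rule Pi_pmf_map) auto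
  finally show ?thesis by (simp add: pmf.map_comp o_def)
qed


lemma walk_single: "walk_of_len E [u] 0 u u"
  by (simp add: walk_of_len_def)

lemma walk_snoc:
  assumes "walk_of_len E xs k u w" "E w v"
  shows "walk_of_len E (xs @ [v]) (Suc k) u v"
proof -
  have L: "length xs = Suc k" "hd xs = u" "last xs = w" "\<forall>i<k. E (xs ! i) (xs ! Suc i)"
    using assms(1) by (auto simp: walk_of_len_def)
  have "xs \<noteq> []" using L by auto
  have "\<forall>i<Suc k. E ((xs @ [v]) ! i) ((xs @ [v]) ! Suc i)"
  proof (intro allI impI)
    fix i assume i: "i < Suc k"
    show "E ((xs @ [v]) ! i) ((xs @ [v]) ! Suc i)"
    proof (cases "i = k")
      case True
      then have "(xs @ [v]) ! i = w" using L \<open>xs \<noteq> []\<close> by (simp add: nth_append last_conv_nth)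
      moreover have "(xs @ [v]) ! Suc i = v" using True L by (simp add: nth_append)
      ultimately show ?thesis using assms(2) by simp
    next
      case False
      then show ?thesis using L i by (simp add: nth_append)
    qed
  qed
  then show ?thesis using L \<open>xs \<noteq> []\<close> by (simp add: walk_of_len_def)
qed

lemma walk_take:
  assumes "walk_of_len E xs k u q" "j \<le> k"
  shows "walk_of_len E (take (Suc j) xs) j u (xs ! j)"
proof -
  have L: "length xs = Suc k" "hd xs = u" "\<forall>i<k. E (xs ! i) (xs ! Suc i)"
    using assms(1) by (auto simp: walk_of_len_def)
  have ne: "take (Suc j) xs \<noteq> []" using L by auto
  have "last (take (Suc j) xs) = xs ! j"
    using ne L assms(2) by (simp add: last_conv_nth)
  moreover have "hd (take (Suc j) xs) = u" using L ne by (simp add: hd_take)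
  ultimately show ?thesis using L assms(2) by (simp add: walk_of_len_def)
qed

lemma gdist_le: "walk_of_len E xs k u v \<Longrightarrow> gdist E u v \<le> k"
  unfolding gdist_def by (rule Least_le) blast

lemma gdist_walk:
  assumes "connected_graph V E" "u \<in> V" "v \<in> V"
  shows "\<exists>xs. walk_of_len E xs (gdist E u v) u v"
proof -
  from assms obtain xs k where "walk_of_len E xs k u v" unfolding connected_graph_def by blast
  then have "\<exists>k xs. walk_of_len E xs k u v" by blast
  then show ?thesis unfolding gdist_def by (rule LeastI_ex)
qed

lemma gdist_step:
  assumes "connected_graph V E" "u \<in> V" "q \<in> V" "E q v"
  shows "gdist E u v \<le> gdist E u q + 1"
proof -
  obtain xs where "walk_of_len E xs (gdist E u q) u q" using gdist_walk[OF assms(1-3)] by blast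
  from walk_snoc[OF this assms(4)] show ?thesis using gdist_le by fastforce
qed

lemma gdist_cons:
  assumes "u \<in> consistent_set V E q v" "q \<noteq> v"
  shows "gdist E u v + 1 \<le> gdist E u q"
proof -
  from assms obtain xs where w: "walk_of_len E xs (gdist E u q) u q" and v: "v \<in> set xs"
    by (auto simp: consistent_set_def on_shortest_path_def)
  let ?k = "gdist E u q"
  from v obtain j where j: "j < length xs" "xs ! j = v" by (auto simp: in_set_conv_nth)
  have len: "length xs = Suc ?k" and lst: "last xs = q" using w by (auto simp: walk_of_len_def)
  have "xs \<noteq> []" using len by auto
  then have "last xs = xs ! ?k" using len by (simp add: last_conv_nth)
  then have "j \<noteq> ?k" using j lst assms(2) by auto
  then have jk: "j < ?k" using j len by auto
  from walk_take[OF w] jk have "walk_of_len E (take (Suc j) xs) j u v" using j by auto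
  then have "gdist E u v \<le> j" by (rule gdist_le)
  then show ?thesis using jk by simp
qed

lemma key:
  assumes sg: "simple_graph V E" and cg: "connected_graph V E"
    and mV: "\<forall>i<s. m i \<in> V" and am: "is_argmin_Phi V E s m q" and e: "E q v"
  shows "2 * card {i\<in>{..<s}. m i \<in> consistent_set V E q v} \<le> s"
proof -
  let ?N = "consistent_set V E q v"
  let ?C = "{i\<in>{..<s}. m i \<in> ?N}"
  have qv: "q \<noteq> v" using sg e by (auto simp: simple_graph_def)
  have qV: "q \<in> V" using am by (simp add: is_argmin_Phi_def)
  have vV: "v \<in> V" using sg e by (auto simp: simple_graph_def)
  have b: "real (gdist E (m i) v) \<le> real (gdist E (m i) q) + (if i \<in> ?C then -1 else 1)"
    if i: "i < s" for i
  proof (cases "i \<in> ?C")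
    case True
    then show ?thesis using gdist_cons[of "m i" V E q v] qv by auto
  next
    case False
    then show ?thesis using gdist_step[OF cg mV[rule_format, OF i] qV e] by auto
  qed
  have "Phi_sample E s m v \<le> (\<Sum>i<s. real (gdist E (m i) q) + (if i \<in> ?C then -1 else 1))"
    unfolding Phi_sample_def by (rule sum_mono) (use b in auto)
  also have "\<dots> = Phi_sample E s m q + (\<Sum>i<s. (if i \<in> ?C then -1 else 1))"
    by (simp add: Phi_sample_def sum.distrib)
  also have "(\<Sum>i<s. (if i \<in> ?C then -1 else 1::real)) = real s - 2 * real (card ?C)"
  proof -
    have "(\<Sum>i<s. (if i \<in> ?C then -1 else 1::real)) = (\<Sum>i<s. 1 - 2 * (if i \<in> ?C then 1 else 0))"
      by (intro sum.cong) auto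
    also have "\<dots> = real s - 2 * (\<Sum>i<s. (if i \<in> ?C then 1 else 0))"
      by (simp add: sum_subtractf sum_distrib_left)
    also have "(\<Sum>i<s. (if i \<in> ?C then 1 else 0::real)) = real (card ?C)"
      by (simp add: sum.If_cases Int_absorb1 Collect_conj_eq lessThan_def Int_commute)
    finally show ?thesis .
  qed
  finally have "Phi_sample E s m v \<le> Phi_sample E s m q + (real s - 2 * real (card ?C))" .
  moreover have "Phi_sample E s m q \<le> Phi_sample E s m v" using am vV by (simp add: is_argmin_Phi_def)
  ultimately show ?thesis by linarith
qed


lemma pair_bound:
  assumes fin: "finite V" and pos: "\<forall>v\<in>V. \<omega> v > 0" and ne: "V \<noteq> {}" and A: "A \<subseteq> V"
    and s: "s > 0" and big: "sum \<omega> A > (1/2 + \<delta>) * sum \<omega> V" and d: "\<delta> > 0"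
  shows "measure_pmf.prob (sample_pmf s V \<omega>) {m. 2 * card {i\<in>{..<s}. m i \<in> A} \<le> s}
           \<le> exp (- 2 * real s * \<delta>\<^sup>2)"
proof -
  let ?p = "measure_pmf.prob (weight_pmf V \<omega>) A"
  have S: "sum \<omega> V > 0" using fin pos ne by (intro sum_pos) auto
  have pe: "?p = sum \<omega> A / sum \<omega> V" by (rule prob_weight[OF fin pos ne A])
  have "(1/2 + \<delta>) * sum \<omega> V / sum \<omega> V < sum \<omega> A / sum \<omega> V"
    using big S by (intro divide_strict_right_mono) auto
  then have pbig: "?p > 1/2 + \<delta>" using S pe by simp
  define \<epsilon> where "\<epsilon> = real s * (?p - 1/2)"
  have e0: "\<epsilon> \<ge> 0" using pbig d by (simp add: \<epsilon>_def)
  have "measure_pmf.prob (sample_pmf s V \<omega>) {m. 2 * card {i\<in>{..<s}. m i \<in> A} \<le> s}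
      = measure_pmf.prob (map_pmf (\<lambda>m. card {i\<in>{..<s}. m i \<in> A}) (sample_pmf s V \<omega>)) {x. 2 * x \<le> s}"
    by (simp add: vimage_def)
  also have "\<dots> = measure_pmf.prob (binomial_pmf s ?p) {x. real x \<le> real s * ?p - \<epsilon>}"
    unfolding sample_binomial by (rule arg_cong[where f="measure_pmf.prob _"]) (auto simp: \<epsilon>_def algebra_simps)
  also have "\<dots> \<le> exp (- 2 * \<epsilon>\<^sup>2 / real s)"
    by (rule binomial_distribution.prob_le) (use s e0 in \<open>auto simp: binomial_distribution_def\<close>)
  also have "\<dots> \<le> exp (- 2 * real s * \<delta>\<^sup>2)"
  proof -
    have "\<delta>\<^sup>2 \<le> (?p - 1/2)\<^sup>2" using pbig d by (intro power_mono) auto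
    then have "real s * \<delta>\<^sup>2 \<le> real s * (?p - 1/2)\<^sup>2" by (intro mult_left_mono) auto
    moreover have "\<epsilon>\<^sup>2 / real s = real s * (?p - 1/2)\<^sup>2" using s by (simp add: \<epsilon>_def power2_eq_square)
    ultimately show ?thesis by simp
  qed
  finally show ?thesis .
qed


lemma nbrs_ne:
  assumes sg: "simple_graph V E" and cg: "connected_graph V E" and q: "q \<in> V" and n2: "card V \<ge> 2"
  shows "nbrs V E q \<noteq> {}"
proof -
  have "finite V" using sg by (simp add: simple_graph_def)
  obtain w where w: "w \<in> V" "w \<noteq> q"
  proof -
    have "\<not> V \<subseteq> {q}"
    proof
      assume "V \<subseteq> {q}"
      then have "card V \<le> card {q}" by (intro card_mono) auto
      then show False using n2 by simp
    qed
    then show ?thesis using that by blast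
  qed
  obtain xs k where wk: "walk_of_len E xs k q w" using cg q w unfolding connected_graph_def by blast
  have k: "k \<noteq> 0"
  proof
    assume "k = 0"
    then have "length xs = 1" "hd xs = q" "last xs = w" using wk by (auto simp: walk_of_len_def)
    then show False using w by (cases xs) auto
  qed
  then have "E (xs ! 0) (xs ! 1)" using wk by (auto simp: walk_of_len_def)
  moreover have "xs ! 0 = q" using wk by (cases xs) (auto simp: walk_of_len_def)
  ultimately have "xs ! 1 \<in> nbrs V E q" using sg by (auto simp: nbrs_def simple_graph_def)
  then show ?thesis by blast
qed

theorem corollary5:
  fixes V :: "'a set" and E :: "'a \<Rightarrow> 'a \<Rightarrow> bool" and \<omega> :: "'a \<Rightarrow> real"
    and \<delta> :: real and n s :: nat
  assumes "simple_graph V E" and "connected_graph V E"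
    and "\<forall>v\<in>V. \<omega> v > 0"
    and "\<delta> > 0"
    and "n = card V"
    and "s = nat \<lceil>8 * ln (real n) / \<delta>\<^sup>2\<rceil>"
  shows "measure_pmf.prob (sample_pmf s V \<omega>)
           {m. \<forall>q. is_argmin_Phi V E s m q \<longrightarrow> delta_close V E \<omega> \<delta> q}
         \<ge> 1 - 1 / real n ^ 3"
proof -
  note sg = assms(1) and cg = assms(2) and pos = assms(3) and d = assms(4)
  have fin: "finite V" using sg by (simp add: simple_graph_def)
  have ne: "V \<noteq> {}" using cg by (simp add: connected_graph_def)
  have n1: "n \<ge> 1" using fin ne assms(5) by (simp add: Suc_le_eq card_gt_0_iff)
  let ?M = "sample_pmf s V \<omega>"
  let ?G = "{m. \<forall>q. is_argmin_Phi V E s m q \<longrightarrow> delta_close V E \<omega> \<delta> q}"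
  show ?thesis
  proof (cases "n = 1")
    case True
    then show ?thesis by simp
  next
    case False
    with n1 have n2: "n \<ge> 2" by simp
    have ln0: "ln (real n) > 0" using n2 by simp
    have sge: "real s \<ge> 8 * ln (real n) / \<delta>\<^sup>2" unfolding assms(6) by linarith
    have s0: "s > 0" using sge ln0 d by (smt (verit) divide_pos_pos of_nat_0_less_iff zero_less_power)
    have sd: "real s * \<delta>\<^sup>2 \<ge> 8 * ln (real n)" using sge d by (simp add: field_simps)
    let ?N = "\<lambda>p. consistent_set V E (fst p) (snd p)"
    define P where "P = {p \<in> V \<times> V. E (fst p) (snd p) \<and> sum \<omega> (?N p) > (1/2 + \<delta>) * sum \<omega> V}"
    define B where "B = (\<lambda>p. {m. 2 * card {i\<in>{..<s}. m i \<in> ?N p} \<le> s})"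
    have finP: "finite P" unfolding P_def using fin by simp
    have cardP: "card P \<le> n ^ 2"
    proof -
      have "card P \<le> card (V \<times> V)" unfolding P_def using fin by (intro card_mono) auto
      then show ?thesis using assms(5) by (simp add: card_cartesian_product power2_eq_square)
    qed
    have incl: "(UNIV - ?G) \<inter> set_pmf ?M \<subseteq> (\<Union>p\<in>P. B p)"
    proof
      fix m assume m: "m \<in> (UNIV - ?G) \<inter> set_pmf ?M"
      have mV: "\<forall>i<s. m i \<in> V"
      proof (intro allI impI)
        fix i assume "i < s"
        then have "m i \<in> set_pmf (weight_pmf V \<omega>)"
          using m unfolding sample_pmf_def by (auto simp: set_Pi_pmf PiE_dflt_def)
        then show "m i \<in> V" using set_weight[OF fin pos ne] by blast
      qed
      from m obtain q where am: "is_argmin_Phi V E s m q" and nc: "\<not> delta_close V E \<omega> \<delta> q" by auto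
      have qV: "q \<in> V" using am by (simp add: is_argmin_Phi_def)
      have nbne: "nbrs V E q \<noteq> {}" using nbrs_ne[OF sg cg qV] n2 assms(5) by simp
      have finnb: "finite (nbrs V E q)" using fin by (simp add: nbrs_def)
      let ?f = "\<lambda>u. sum \<omega> (consistent_set V E q u)"
      have "Lambda V E \<omega> q \<in> ?f ` nbrs V E q" unfolding Lambda_def
        using finnb nbne by (intro Max_in) auto
      then obtain v where v: "v \<in> nbrs V E q" and lv: "Lambda V E \<omega> q = ?f v" by auto
      have big: "?f v > (1/2 + \<delta>) * sum \<omega> V" using nc lv by (simp add: delta_close_def)
      have ev: "E q v" "v \<in> V" using v by (auto simp: nbrs_def)
      have "(q, v) \<in> P" unfolding P_def using qV ev big by auto
      moreover have "m \<in> B (q, v)" unfolding B_def using key[OF sg cg mV am ev(1)] by simp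
      ultimately show "m \<in> (\<Union>p\<in>P. B p)" by blast
    qed
    have Bb: "measure_pmf.prob ?M (B p) \<le> 1 / real n ^ 16" if p: "p \<in> P" for p
    proof -
      have A: "?N p \<subseteq> V" by (auto simp: consistent_set_def)
      have big: "sum \<omega> (?N p) > (1/2 + \<delta>) * sum \<omega> V" using p by (simp add: P_def)
      have "measure_pmf.prob ?M (B p) \<le> exp (- 2 * real s * \<delta>\<^sup>2)"
        unfolding B_def by (rule pair_bound[OF fin pos ne A s0 big d])
      also have "\<dots> \<le> exp (- (16 * ln (real n)))" using sd by simp
      also have "- (16 * ln (real n)) = - ln (real n ^ 16)" using n2 by (simp add: ln_realpow)
      also have "exp (- ln (real n ^ 16)) = 1 / real n ^ 16" using n2 by (simp add: exp_minus inverse_eq_divide)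
      finally show ?thesis .
    qed
    have "measure_pmf.prob ?M (UNIV - ?G) = measure_pmf.prob ?M ((UNIV - ?G) \<inter> set_pmf ?M)"
      by (simp add: measure_Int_set_pmf)
    also have "\<dots> \<le> measure_pmf.prob ?M (\<Union>p\<in>P. B p)"
      by (rule measure_pmf.finite_measure_mono[OF incl]) simp
    also have "\<dots> \<le> (\<Sum>p\<in>P. measure_pmf.prob ?M (B p))"
      by (rule measure_pmf.finite_measure_subadditive_finite[OF finP]) simp
    also have "\<dots> \<le> (\<Sum>p\<in>P. 1 / real n ^ 16)" by (rule sum_mono) (rule Bb)
    also have "\<dots> = real (card P) / real n ^ 16" by simp
    also have "\<dots> \<le> real n ^ 2 / real n ^ 16"
      using cardP by (intro divide_right_mono) (auto simp flip: of_nat_power)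
    also have "\<dots> \<le> 1 / real n ^ 3"
    proof -
      have "real n ^ 2 * real n ^ 3 \<le> real n ^ 16"
        unfolding power_add[symmetric] using n2 by (intro power_increasing) auto
      then show ?thesis using n2 by (simp add: field_simps)
    qed
    finally have c: "measure_pmf.prob ?M (UNIV - ?G) \<le> 1 / real n ^ 3" .
    have "measure_pmf.prob ?M (UNIV - ?G) = 1 - measure_pmf.prob ?M ?G"
      using measure_pmf.finite_measure_compl[of ?G ?M] by (simp add: measure_pmf.prob_space)
    then show ?thesis using c by simp
  qed
qed

end
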